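(* Let $n\ge2$ and let $\mathsf{T}$ be a string of length $n$ over $\{\mathtt{a},\mathtt{b}\}$ ($\mathtt{a}<\mathtt{b}$) whose suffix array $P=[p_1,\ldots,p_n]$ is an arithmetically progressed permutation with ratio $k$, with $P\neq[n,n-1,\ldots,1]$ and $p_1\neq k+1$. Then $\mathsf{T}$ is a balanced word.
   Context: Lexicographic order with a proper prefix smaller than the longer string; suffix array: permutation of $[1..n]$ such that $\mathsf{T}[\mathsf{SA}_{\mathsf{T}}[i]..n]$ is the $i$-th smallest suffix. $x\bmod n$: representative in $[1..n]$. An arithmetically progressed permutation of length $n$ with ratio $k\in[1..n-1]$ is a permutation $P$ of $[1..n]$ with $P[i+1]=P[i]+k\bmod n$. A binary string $\mathsf{T}$ is balanced if for every character $c\in\{\mathtt{a},\mathtt{b}\}$ and all pairs of equal-length factors $\mathsf{U},\mathsf{V}$ of the infinite periodic string $\mathsf{T}\mathsf{T}\mathsf{T}\cdots$, the numbers of occurrences of $c$ in $\mathsf{U}$ and in $\mathsf{V}$ differ by at most one. *)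

theory Defs
  imports Main
begin

datatype letter = a | b

definition letter_less :: "(letter \<times> letter) set" where
  "letter_less = {(a, b)}"

text \<open>Lexicographic order on strings; a proper prefix is smaller (this is how lexord behaves).\<close>
definition str_less :: "letter list \<Rightarrow> letter list \<Rightarrow> bool" where
  "str_less U V \<longleftrightarrow> (U, V) \<in> lexord letter_less"

text \<open>The suffix T[i..n] for 1-based i.\<close>
definition suf :: "letter list \<Rightarrow> nat \<Rightarrow> letter list" where
  "suf T i = drop (i - 1) T"

definition is_suffix_array :: "letter list \<Rightarrow> nat list \<Rightarrow> bool" where
  "is_suffix_array T SA \<longleftrightarrow>
     length SA = length T \<and> set SA = {1..length T} \<and> distinct SA \<and>
     (\<forall>i j. i < j \<and> j < length SA \<longrightarrow> str_less (suf T (SA ! i)) (suf T (SA ! j)))"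

text \<open>x mod n with representative in [1..n].\<close>
definition mod1 :: "nat \<Rightarrow> nat \<Rightarrow> nat" where
  "mod1 x n = (x + n - 1) mod n + 1"

definition is_permutation :: "nat \<Rightarrow> nat list \<Rightarrow> bool" where
  "is_permutation n P \<longleftrightarrow> length P = n \<and> distinct P \<and> set P = {1..n}"

definition is_APP :: "nat \<Rightarrow> nat \<Rightarrow> nat list \<Rightarrow> bool" where
  "is_APP n k P \<longleftrightarrow> is_permutation n P \<and> 1 \<le> k \<and> k \<le> n - 1 \<and>
     (\<forall>i. i + 1 < n \<longrightarrow> P ! (i + 1) = mod1 (P ! i + k) n)"

text \<open>Number of occurrences of c in the length-m factor of TTT... starting at (0-based) position i.\<close>
definition occ_inf :: "letter list \<Rightarrow> letter \<Rightarrow> nat \<Rightarrow> nat \<Rightarrow> nat" where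
  "occ_inf T c i m = card {j. j < m \<and> T ! ((i + j) mod length T) = c}"

definition balanced :: "letter list \<Rightarrow> bool" where
  "balanced T \<longleftrightarrow>
     (\<forall>c i j m. occ_inf T c i m \<le> occ_inf T c j m + 1)"

end

theory Submission
  imports Defs "HOL-Number_Theory.Cong"
begin

lemma sl_first:
  assumes "str_less (drop p T) (drop q T)" "p < length T" "q < length T" "T!p = b"
  shows "T!q = b"
proof -
  have "(T!p # drop (Suc p) T, T!q # drop (Suc q) T) \<in> lexord letter_less"
    using assms(1-3) by (simp add: str_less_def Cons_nth_drop_Suc)
  then show ?thesis using assms(4) by (auto simp: letter_less_def)
qed

lemma sl_tail:
  assumes "str_less (drop p T) (drop q T)" "p < length T" "q < length T" "T!p = T!q"
  shows "str_less (drop (Suc p) T) (drop (Suc q) T)"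
proof -
  have "(T!p # drop (Suc p) T, T!q # drop (Suc q) T) \<in> lexord letter_less"
    using assms(1-3) by (simp add: str_less_def Cons_nth_drop_Suc)
  then show ?thesis using assms(4) by (auto simp: letter_less_def str_less_def)
qed

lemma sl_irrefl: "\<not> str_less xs xs"
  unfolding str_less_def by (rule lexord_irreflexive) (auto simp: letter_less_def)

lemma sl_trans: "str_less x y \<Longrightarrow> str_less y z \<Longrightarrow> str_less x z"
  unfolding str_less_def by (rule lexord_trans) (auto simp: letter_less_def trans_def)

lemma sl_nil: "\<not> str_less x []"
  unfolding str_less_def by (simp add: lexord_Nil_right)

theorem mainTheorem15:
  fixes T :: "letter list" and P :: "nat list" and n k :: nat
  assumes "n \<ge> 2"
    and "length T = n"
    and "is_suffix_array T P"
    and "is_APP n k P"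
    and "P \<noteq> rev [1..<n+1]"
    and "P ! 0 \<noteq> k + 1"
  shows "balanced T"
proof -
  have n2: "n \<ge> 2" by fact
  have lenT: "length T = n" by fact
  from assms(4) have lenP: "length P = n" and distP: "distinct P" and setP: "set P = {1..n}"
    and k1: "1 \<le> k" "k \<le> n-1" and step: "\<forall>i. i+1<n \<longrightarrow> P!(i+1) = mod1 (P!i + k) n"
    by (auto simp: is_APP_def is_permutation_def)
  from assms(3) lenT have sorted: "\<forall>i j. i<j \<and> j<n \<longrightarrow> str_less (suf T (P!i)) (suf T (P!j))"
    by (auto simp: is_suffix_array_def)
  define pos where "pos x = P!x - 1" for x
  have Pge: "1 \<le> P!x \<and> P!x \<le> n" if "x<n" for x
  proof -
    have "P!x \<in> set P" using that lenP by simp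
    then show ?thesis using setP by auto
  qed
  have pos_lt: "pos x < n" if "x<n" for x using Pge[OF that] n2 unfolding pos_def by linarith
  have pos_inj: "x = y" if "x<n" "y<n" "pos x = pos y" for x y
  proof -
    have "P!x = P!y" using that Pge[of x] Pge[of y] unfolding pos_def by linarith
    then show ?thesis using distP that lenP by (simp add: nth_eq_iff_index_eq)
  qed
  have pos_step: "pos (x+1) = (pos x + k) mod n" if "x+1<n" for x
  proof -
    have "P!(x+1) = (P!x + k + n - 1) mod n + 1" using step that by (simp add: mod1_def)
    moreover have "P!x + k + n - 1 = pos x + k + n" using Pge[of x] that unfolding pos_def by simp
    ultimately show ?thesis unfolding pos_def by simp
  qed
  have pos_formula: "x<n \<longrightarrow> pos x = (pos 0 + x*k) mod n" for x
  proof (induction x)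
    case 0 then show ?case using pos_lt[of 0] n2 by simp
  next
    case (Suc x)
    show ?case
    proof
      assume "Suc x < n"
      then have "pos (Suc x) = (pos x + k) mod n" using pos_step[of x] by simp
      also have "\<dots> = ((pos 0 + x*k) mod n + k) mod n" using Suc \<open>Suc x < n\<close> by simp
      also have "\<dots> = (pos 0 + x*k + k) mod n" by (simp add: mod_add_left_eq)
      also have "\<dots> = (pos 0 + Suc x * k) mod n" by (simp add: algebra_simps)
      finally show "pos (Suc x) = (pos 0 + Suc x * k) mod n" .
    qed
  qed
  have surj: "pos ` {..<n} = {..<n}"
    by (rule endo_inj_surj) (auto simp: pos_lt inj_on_def intro: pos_inj)
  have "(pos 0 + 1) mod n \<in> pos ` {..<n}" using surj n2 by simp
  then obtain d where d: "d < n" "pos d = (pos 0 + 1) mod n" by auto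
  have "(pos 0 + d*k) mod n = (pos 0 + 1) mod n" using d pos_formula[of d] by simp
  then have "[pos 0 + d*k = pos 0 + 1] (mod n)" by (simp add: cong_def)
  then have "[d*k = 1] (mod n)" using cong_add_lcancel_nat[of "pos 0" "d*k" 1 n] by simp
  then have dk: "(d*k) mod n = 1" using n2 by (simp add: cong_def)
  have d1: "d \<ge> 1" using dk n2 by (cases d) auto
  have succ: "pos ((x+d) mod n) = (pos x + 1) mod n" if "x<n" for x
  proof -
    have "pos ((x+d) mod n) = (pos 0 + ((x+d) mod n)*k) mod n" using pos_formula[of "(x+d) mod n"] n2 by simp
    also have "\<dots> = (pos 0 + (x+d)*k) mod n" by (metis mod_add_right_eq mod_mult_left_eq)
    also have "\<dots> = ((pos 0 + x*k) + d*k) mod n" by (simp add: algebra_simps)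
    also have "\<dots> = ((pos 0 + x*k) mod n + (d*k) mod n) mod n" by (simp add: mod_simps)
    also have "\<dots> = (pos x + 1) mod n" using dk pos_formula[of x] that by simp
    finally show ?thesis .
  qed
  define R where "R p = inv_into {..<n} pos p" for p
  have R: "R p < n \<and> pos (R p) = p" if "p<n" for p
  proof -
    have pp: "p \<in> pos ` {..<n}" using surj that by simp
    show ?thesis unfolding R_def using inv_into_into[OF pp] f_inv_into_f[OF pp] by simp
  qed
  have Rpos: "R (pos x) = x" if "x<n" for x
  proof -
    have "pos (R (pos x)) = pos x" "R (pos x) < n" using R pos_lt that by auto
    then show ?thesis using pos_inj that by blast
  qed
  define L where "L x = T!(pos x)" for x
  have less: "str_less (drop (pos x) T) (drop (pos y) T)" if "x<y" "y<n" for x y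
    using sorted that unfolding suf_def pos_def by auto
  have mono: "L y = b" if "x<y" "y<n" "L x = b" for x y
    using sl_first[OF less[OF that(1,2)]] that pos_lt lenT unfolding L_def by auto
  have letter: "l \<noteq> a \<longleftrightarrow> l = b" for l by (cases l) auto
  define m where "m = (LEAST x. x = n \<or> L x = b)"
  have mn: "m \<le> n" unfolding m_def by (rule Least_le) simp
  have mL: "L x = a \<longleftrightarrow> x < m" if "x<n" for x
  proof
    assume "L x = a"
    show "x < m"
    proof (rule ccontr)
      assume "\<not> x < m"
      then have "m \<le> x" by simp
      have "m = n \<or> L m = b" unfolding m_def by (rule LeastI[of _ n]) simp
      then have "L m = b" using \<open>m \<le> x\<close> that by auto
      then have "L x = b" using mono[of m x] \<open>m \<le> x\<close> that by (cases "m = x") auto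
      then show False using \<open>L x = a\<close> by simp
    qed
  next
    assume "x < m"
    then have "\<not> (x = n \<or> L x = b)" unfolding m_def by (rule not_less_Least)
    then show "L x = a" using letter by blast
  qed
  have lastmin: "pos y \<noteq> n-1" if "x<y" "y<n" "L x = L y" for x y
  proof
    assume py: "pos y = n-1"
    have "str_less (drop (Suc (pos x)) T) (drop (Suc (pos y)) T)"
      using sl_tail[OF less[OF that(1,2)]] that pos_lt lenT unfolding L_def by auto
    moreover have "drop (Suc (pos y)) T = []" using py lenT n2 by simp
    ultimately show False using sl_nil by simp
  qed
  have nosplit: "x + d < n \<longleftrightarrow> y + d < n"
    if "x<y" "y<n" "L x = L y" "pos x \<noteq> n-1" for x y
  proof -
    have py: "pos y \<noteq> n-1" using lastmin that by blast
    have px1: "pos x + 1 < n" using pos_lt[of x] that by linarith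
    have py1: "pos y + 1 < n" using pos_lt[of y] py that by linarith
    have st: "str_less (drop (Suc (pos x)) T) (drop (Suc (pos y)) T)"
      using sl_tail[OF less[OF that(1,2)]] that pos_lt lenT unfolding L_def by auto
    have sx: "pos ((x+d) mod n) = Suc (pos x)" using succ[of x] that px1 by simp
    have sy: "pos ((y+d) mod n) = Suc (pos y)" using succ[of y] that py1 by simp
    show ?thesis
    proof (rule ccontr)
      assume "\<not> (x + d < n \<longleftrightarrow> y + d < n)"
      then have "x + d < n" "\<not> y + d < n" using that by auto
      then have lt: "(y+d) mod n < (x+d) mod n" using that d by (simp add: le_mod_geq)
      have "str_less (drop (pos ((y+d) mod n)) T) (drop (pos ((x+d) mod n)) T)"
        using less[OF lt] n2 by simp
      then have "str_less (drop (Suc (pos y)) T) (drop (Suc (pos x)) T)" using sx sy by simp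
      then show False using st sl_trans sl_irrefl by blast
    qed
  qed
  have H: "pos (n-1) \<noteq> 0"
  proof
    assume h: "pos (n-1) = 0"
    have p0: "pos 0 = P!0 - 1" by (simp add: pos_def)
    have "pos 0 < n" using pos_lt n2 by simp
    then have "pos 0 = (pos 0 + n*k) mod n" by simp
    also have "\<dots> = ((pos 0 + (n-1)*k) + k) mod n"
    proof -
      have "n*k = (n-1)*k + k" using n2 by (cases n) auto
      then show ?thesis by (metis add.assoc)
    qed
    also have "\<dots> = ((pos 0 + (n-1)*k) mod n + k) mod n" by (simp add: mod_simps)
    also have "\<dots> = k mod n" using h pos_formula[of "n-1"] n2 by simp
    also have "\<dots> = k" using k1 n2 by simp
    finally have "pos 0 = k" .
    then show False using assms(6) Pge[of 0] n2 unfolding pos_def by (simp; linarith)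
  qed
  define z where "z = R (n-1)"
  have z: "z < n" "pos z = n-1" using R[of "n-1"] n2 unfolding z_def by auto
  have zc: "(z + d) mod n \<noteq> n-1"
  proof
    assume h: "(z + d) mod n = n-1"
    have "pos ((z+d) mod n) = (n - 1 + 1) mod n" using succ[OF z(1)] z by simp
    then have "pos (n-1) = 0" using h n2 by simp
    then show False using H by simp
  qed
  have md: "m + d = n"
  proof (cases "L z = a")
    case True
    have z0: "z = 0"
    proof (rule ccontr)
      assume "z \<noteq> 0"
      then have "0 < z" by simp
      have "L 0 = a" using mL[of 0] mL[of z] True z n2 \<open>0<z\<close> by auto
      then show False using lastmin[of 0 z] \<open>0<z\<close> z True by simp
    qed
    have dn: "d \<noteq> n-1" using zc z0 d by simp
    have m1: "m \<ge> 1" using mL[of z] z True by simp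
    have le: "m + d \<le> n"
    proof (rule ccontr)
      assume "\<not> m + d \<le> n"
      then have m3: "m \<ge> 3" "m \<le> n" using dn d mn by auto
      have p1: "pos 1 \<noteq> n-1" using pos_inj[of 1 0] z z0 n2 by force
      have "L 1 = L (m-1)" using mL[of 1] mL[of "m-1"] m3 by auto
      then have "1 + d < n \<longleftrightarrow> m - 1 + d < n" using nosplit[of 1 "m-1"] m3 p1 by auto
      then show False using dn d m3 \<open>\<not> m + d \<le> n\<close> by auto
    qed
    have ge: "m + d \<ge> n"
    proof (rule ccontr)
      assume "\<not> m + d \<ge> n"
      then have mm: "m < n-1" using d1 by auto
      have p1: "pos m \<noteq> n-1" using pos_inj[of m 0] z z0 n2 m1 mm by force
      have "L m = L (n-1)" using mL[of m] mL[of "n-1"] mm letter by auto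
      then have "m + d < n \<longleftrightarrow> n - 1 + d < n" using nosplit[of m "n-1"] mm p1 n2 by auto
      then show False using d1 \<open>\<not> m + d \<ge> n\<close> by auto
    qed
    show ?thesis using le ge by simp
  next
    case False
    have zm: "z = m"
    proof -
      have "m \<le> z" using mL[of z] z False by auto
      moreover have "\<not> m < z"
      proof
        assume "m < z"
        have "L m = L z" using mL[of m] mL[of z] z False \<open>m<z\<close> letter by auto
        then show False using lastmin[of m z] \<open>m<z\<close> z by simp
      qed
      ultimately show ?thesis by simp
    qed
    have ge: "m + d \<ge> n"
    proof (rule ccontr)
      assume a1: "\<not> m + d \<ge> n"
      then have "m + d \<noteq> n - 1" using zc zm by simp
      then have mm: "m + 1 < n - 1" using a1 d1 by auto
      have p1: "pos (m+1) \<noteq> n-1" using pos_inj[of "m+1" m] z zm mm by force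
      have "L (m+1) = L (n-1)" using mL[of "m+1"] mL[of "n-1"] mm letter by auto
      then have "m + 1 + d < n \<longleftrightarrow> n - 1 + d < n" using nosplit[of "m+1" "n-1"] mm p1 by auto
      then show False using d1 a1 \<open>m + d \<noteq> n - 1\<close> by auto
    qed
    have le: "m + d \<le> n"
    proof (rule ccontr)
      assume a1: "\<not> m + d \<le> n"
      then have mm: "m \<ge> 2" "m \<le> n" using d mn by auto
      have p1: "pos 0 \<noteq> n-1" using pos_inj[of 0 m] z zm mm by force
      have "L 0 = L (m-1)" using mL[of 0] mL[of "m-1"] mm by auto
      then have "0 + d < n \<longleftrightarrow> m - 1 + d < n" using nosplit[of 0 "m-1"] mm p1 by auto
      then show False using d a1 by auto
    qed
    show ?thesis using le ge by simp
  qed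
  have Rstep: "R ((p+1) mod n) = (R p + d) mod n" if "p<n" for p
  proof -
    have "pos ((R p + d) mod n) = (p + 1) mod n" using succ[of "R p"] R[OF that] by simp
    then have "R (pos ((R p + d) mod n)) = R ((p+1) mod n)" by simp
    then show ?thesis using Rpos[of "(R p + d) mod n"] n2 by simp
  qed
  have rec: "R ((p+1) mod n) + m = R p + (if T!p = a then n else 0)" if "p<n" for p
  proof -
    have Tp: "T!p = L (R p)" using R[OF that] unfolding L_def by simp
    have "T!p = a \<longleftrightarrow> R p < m" using Tp mL R[OF that] by simp
    then show ?thesis using Rstep[OF that] md R[OF that] by (auto simp: le_mod_geq)
  qed
  define cnt where "cnt l i = card {j. j < l \<and> T!((i+j) mod n) = a}" for l i
  have count: "R ((i+l) mod n) + l*m = R (i mod n) + n * cnt l i" for i l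
  proof (induction l)
    case 0 then show ?case by (simp add: cnt_def)
  next
    case (Suc l)
    define Q where "Q j = (T!((i+j) mod n) = a)" for j
    have sets: "{j. j < Suc l \<and> Q j} = (if Q l then insert l {j. j<l \<and> Q j} else {j. j<l \<and> Q j})"
      by (auto simp: less_Suc_eq)
    have cs: "cnt (Suc l) i = cnt l i + (if Q l then 1 else 0)"
      unfolding cnt_def Q_def[symmetric] sets by simp
    define p where "p = (i+l) mod n"
    have pn: "p < n" using n2 unfolding p_def by simp
    have "(p+1) mod n = (i + Suc l) mod n" unfolding p_def by (simp add: mod_simps)
    then have "R ((i + Suc l) mod n) + m = R p + (if T!p = a then n else 0)" using rec[OF pn] by simp
    moreover have "Q l = (T!p = a)" unfolding Q_def p_def by simp
    ultimately show ?case using Suc cs unfolding p_def by (auto simp: algebra_simps)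
  qed
  have Rlt: "R (q mod n) < n" for q using R n2 by simp
  have balA: "cnt l i \<le> cnt l j + 1" for l i j
  proof -
    have e1: "R ((i+l) mod n) + l*m = R (i mod n) + n * cnt l i" by (rule count)
    have e2: "R ((j+l) mod n) + l*m = R (j mod n) + n * cnt l j" by (rule count)
    have "n * cnt l i < n * (cnt l j + 2)"
      using e1 e2 Rlt[of "i+l"] Rlt[of "j"] Rlt[of "j+l"] Rlt[of i] by (simp add: algebra_simps)
    then have "cnt l i < cnt l j + 2" using mult_less_cancel1[of n "cnt l i" "cnt l j + 2"] by (simp only:)
    then show ?thesis by simp
  qed
  have cntb: "card {j. j < l \<and> T!((i+j) mod n) = b} + cnt l i = l" for l i
  proof -
    define B where "B = {j. j < l \<and> T!((i+j) mod n) = b}"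
    define A where "A = {j. j < l \<and> T!((i+j) mod n) = a}"
    have u: "B \<union> A = {..<l}" unfolding A_def B_def using letter by auto
    have di: "B \<inter> A = {}" unfolding A_def B_def by auto
    have fB: "finite B" unfolding B_def by (rule finite_subset[of _ "{..<l}"]) auto
    have fA: "finite A" unfolding A_def by (rule finite_subset[of _ "{..<l}"]) auto
    have "card (B \<union> A) = card B + card A" by (rule card_Un_disjoint[OF fB fA di])
    then have "card B + card A = l" using u by simp
    then show ?thesis unfolding cnt_def A_def B_def .
  qed
  show ?thesis unfolding balanced_def occ_inf_def lenT
  proof (intro allI)
    fix c i j l
    show "card {ja. ja < l \<and> T ! ((i + ja) mod n) = c} \<le> card {ja. ja < l \<and> T ! ((j + ja) mod n) = c} + 1"
    proof (cases c)
      case a then show ?thesis using balA[of l i j] unfolding cnt_def by simp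
    next
      case b
      have "cnt l j \<le> cnt l i + 1" by (rule balA)
      then show ?thesis using b cntb[of l i] cntb[of l j] by simp
    qed
  qed
qed

end
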